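(* Let $\mathbf d\in\mathbb Z^n$ with $m=d_1+\dots+d_n$ and $\gcd(m,n)=1$. Then $y^{\mathbf d}s_1\cdots s_{n-1}$ is conjugate in $\widetilde{S_n}$ to $\pi^m$, and $\pi^m$ is an element of minimal length in this conjugacy class.
   Context: $\widetilde{S_n}$ is identified with the group of bijections $v:\mathbb Z\to\mathbb Z$ with $v(m+n)=v(m)+n$; $s_i$ ($i\in\mathbb Z/n$) swaps $i$ and $i+1$ (periodically extended), $\pi(m)=m+1$, $y_i(m)=m+n$ if $m\equiv i\bmod n$ and $y_i(m)=m$ otherwise ($1\le i\le n$); $y^{\mathbf d}=y_1^{d_1}\cdots y_n^{d_n}$. $\widehat{S_n}$ is the Coxeter group generated by $s_0,\dots,s_{n-1}$; every $v\in\widetilde{S_n}$ is uniquely $\pi^k\alpha$ with $\alpha\in\widehat{S_n}$, and the length is $\ell(v):=\ell(\alpha)$ (Coxeter length), so $\ell(\pi^k)=0$. *)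

theory Defs
  imports Main
begin

text \<open>Extended affine symmetric group: bijections v of the integers with v(m+n) = v(m)+n.
  Group product is composition of functions.\<close>
definition ext_aff :: "nat \<Rightarrow> (int \<Rightarrow> int) set" where
  "ext_aff n = {v. bij v \<and> (\<forall>m. v (m + int n) = v m + int n)}"

definition s_refl :: "nat \<Rightarrow> int \<Rightarrow> int \<Rightarrow> int" where
  "s_refl n i m = (if m mod int n = i mod int n then m + 1
                   else if m mod int n = (i + 1) mod int n then m - 1 else m)"

definition pi_shift :: "int \<Rightarrow> int" where
  "pi_shift m = m + 1"

definition y_gen :: "nat \<Rightarrow> nat \<Rightarrow> int \<Rightarrow> int" where
  "y_gen n i m = (if m mod int n = int i mod int n then m + int n else m)"

definition fpow :: "('a \<Rightarrow> 'a) \<Rightarrow> int \<Rightarrow> 'a \<Rightarrow> 'a" where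
  "fpow f k = (if 0 \<le> k then f ^^ nat k else (inv f) ^^ nat (- k))"

definition comp_list :: "('a \<Rightarrow> 'a) list \<Rightarrow> 'a \<Rightarrow> 'a" where
  "comp_list fs = foldr (\<circ>) fs id"

definition y_pow :: "nat \<Rightarrow> (nat \<Rightarrow> int) \<Rightarrow> int \<Rightarrow> int" where
  "y_pow n d = comp_list (map (\<lambda>i. fpow (y_gen n i) (d i)) [1..<n+1])"

text \<open>Length: l(pi^k alpha) = Coxeter length of alpha, i.e. the least number of simple
  reflections s_0..s_{n-1} needed to write alpha (the decomposition v = pi^k alpha is unique).\<close>
definition aff_length :: "nat \<Rightarrow> (int \<Rightarrow> int) \<Rightarrow> nat" where
  "aff_length n v = (LEAST k. \<exists>j is. length is = k \<and> set is \<subseteq> {0..<int n} \<and>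
       v = fpow pi_shift j \<circ> comp_list (map (s_refl n) is))"

definition conj_in :: "nat \<Rightarrow> (int \<Rightarrow> int) \<Rightarrow> (int \<Rightarrow> int) \<Rightarrow> bool" where
  "conj_in n v w = (\<exists>g \<in> ext_aff n. v = g \<circ> w \<circ> inv g)"

end

theory Submission
  imports Defs
begin

lemma per_nat:
  assumes "\<forall>x. f (x + N) = f x + (N::int)"
  shows "f (x + int j * N) = f x + int j * N"
proof (induction j arbitrary: x)
  case 0 then show ?case by simp
next
  case (Suc j)
  have "f (x + int (Suc j) * N) = f ((x + int j * N) + N)" by (simp add: algebra_simps)
  also have "\<dots> = f x + int j * N + N" using assms Suc by simp
  finally show ?case by (simp add: algebra_simps)
qed

lemma per_int:
  assumes "\<forall>x. f (x + N) = f x + (N::int)"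
  shows "f (x + l * N) = f x + l * N"
proof (cases "l \<ge> 0")
  case True
  then show ?thesis using per_nat[OF assms, of x "nat l"] by simp
next
  case False
  define y where "y = x + l * N"
  have "f (y + int (nat (-l)) * N) = f y + int (nat (-l)) * N" by (rule per_nat[OF assms])
  moreover have "y + int (nat (-l)) * N = x" using False y_def by (simp add: algebra_simps)
  ultimately show ?thesis using False y_def by (simp add: algebra_simps)
qed

lemma conj_lemma:
  fixes w :: "int \<Rightarrow> int" and n :: nat and m :: int
  assumes npos: "n \<ge> 1"
    and per: "\<forall>x. w (x + int n) = w x + int n"
    and Wres: "\<forall>k<n. (w^^k) 0 mod int n = int k"
    and Wn: "(w^^n) 0 = int n * m"
    and cop: "gcd m (int n) = 1"
  shows "\<exists>g. bij g \<and> (\<forall>x. g (x + int n) = g x + int n) \<and> (\<forall>x. g (x + m) = w (g x))"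
proof -
  define N where "N = int n"
  have Npos: "N > 0" using npos N_def by simp
  obtain u v where uv: "u * m + v * N = 1" using bezout_int[of m N] cop N_def by auto
  define W where "W k = (w^^k) 0" for k
  define K where "K x = (x * u) mod N" for x
  define L where "L x = (x - K x * m) div N" for x
  define g where "g x = W (nat (K x)) + L x * N" for x
  have K0: "0 \<le> K x" "K x < N" for x using Npos K_def by auto
  have Kdvd: "N dvd (x - K x * m)" for x
  proof -
    have "x - K x * m = x * (u*m + v*N) - K x * m" using uv by simp
    also have "\<dots> = (x*u - K x) * m + x*v*N" by (simp add: algebra_simps)
    finally have e1: "x - K x * m = (x*u - K x) * m + x*v*N" .
    have e2: "x*u - K x = N * (x*u div N)" using K_def minus_mod_eq_mult_div by simp
    have "x - K x * m = N*(x*u div N)*m + x*v*N" unfolding e1 e2 by simp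
    then have "x - K x * m = N * ((x*u div N) * m + x * v)" by (simp add: algebra_simps)
    then show ?thesis by simp
  qed
  have xdec: "x = K x * m + L x * N" for x using Kdvd[of x] L_def by auto
  have gres: "g x mod N = K x" for x
  proof -
    have "W (nat (K x)) mod N = K x" using Wres K0[of x] W_def N_def
      by (metis nat_less_iff int_nat_eq)
    then show ?thesis using g_def by simp
  qed
  have gper: "g (x + N) = g x + N" for x
  proof -
    have "K (x + N) = K x" using K_def by (simp add: algebra_simps)
    moreover have "L (x + N) = L x + 1"
    proof -
      have "L (x + N) = ((x - K x * m) + N) div N" using L_def \<open>K (x + N) = K x\<close>
        by (simp add: algebra_simps)
      then show ?thesis using L_def Npos by (simp add: div_add_self2)
    qed
    ultimately show ?thesis using g_def by (simp add: algebra_simps)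
  qed
  have wper: "w (y + l * N) = w y + l * N" for y l using per_int[of w N] per N_def by simp
  have gstep: "g (x + m) = w (g x)" for x
  proof -
    have mu: "m * u mod N = 1 mod N" using uv
      by (metis mod_mult_self2 mult.commute add.commute)
    have "K (x + m) = (x*u + m*u) mod N" using K_def by (simp add: algebra_simps)
    also have "\<dots> = (K x + 1) mod N" using mu K_def by (metis mod_add_cong mod_mod_trivial)
    finally have Kxm: "K (x + m) = (K x + 1) mod N" .
    show ?thesis
    proof (cases "K x + 1 < N")
      case True
      then have Kxm': "K (x+m) = K x + 1" using Kxm K0[of x] by simp
      then have "L (x + m) = L x" using L_def by (simp add: algebra_simps)
      moreover have "W (nat (K x + 1)) = w (W (nat (K x)))" using K0[of x] W_def
      proof -
        have "nat (K x + 1) = Suc (nat (K x))" using K0[of x] by simp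
        then show ?thesis using W_def by simp
      qed
      ultimately show ?thesis using Kxm' g_def wper by simp
    next
      case False
      then have KN: "K x = N - 1" using K0[of x] by simp
      then have Kxm': "K (x+m) = 0" using Kxm by simp
      have "x + m = (L x + m) * N" using xdec[of x] KN by (simp add: algebra_simps)
      then have Lxm: "L (x+m) = L x + m" using L_def Kxm' Npos by simp
      have "W n = w (W (n - 1))" using W_def npos
        by (metis Suc_diff_1 funpow.simps(2) less_le_trans o_apply zero_less_one)
      moreover have "nat (K x) = n - 1" using KN N_def by simp
      ultimately have "w (W (nat (K x))) = N * m" using Wn W_def N_def by simp
      moreover have "w (g x) = w (W (nat (K x))) + L x * N" using g_def wper by simp
      moreover have "g (x + m) = (L x + m) * N" using g_def Kxm' Lxm W_def by simp
      ultimately show ?thesis by (simp add: algebra_simps)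
    qed
  qed
  have inj: "inj g"
  proof (rule injI)
    fix x y assume "g x = g y"
    then have "K x = K y" using gres by metis
    then have "L x = L y" using \<open>g x = g y\<close> g_def Npos by simp
    then show "x = y" using xdec[of x] xdec[of y] \<open>K x = K y\<close> by simp
  qed
  have surj: "surj g"
  proof -
    { fix z
      define k0 where "k0 = z mod N"
      define x where "x = k0 * m + ((z - W (nat k0)) div N) * N"
      have k00: "0 \<le> k0" "k0 < N" using Npos k0_def by auto
      have "K x = (k0 * (m*u) + ((z - W (nat k0)) div N) * u * N) mod N"
        using K_def x_def by (simp add: algebra_simps)
      also have "\<dots> = (k0 * (m*u)) mod N" by simp
      also have "\<dots> = (k0 * 1) mod N" using uv
        by (metis mod_mult_right_eq mod_mult_self2 mult.commute add.commute)
      also have "\<dots> = k0" using k00 by simp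
      finally have Kx: "K x = k0" .
      have "L x = (z - W (nat k0)) div N" using L_def Kx x_def Npos by simp
      moreover have "W (nat k0) mod N = k0" using Wres k00 W_def N_def
        by (metis nat_less_iff int_nat_eq)
      then have "N dvd (z - W (nat k0))" using k0_def by (metis mod_eq_dvd_iff mod_mod_trivial)
      ultimately have "g x = z" using g_def Kx by simp
      then have "z \<in> range g" by auto }
    then show ?thesis by auto
  qed
  show ?thesis using inj surj gper gstep N_def by (intro exI[of _ g]) (auto simp: bij_def)
qed

lemma funpow_T:
  fixes P :: "int \<Rightarrow> bool"
  assumes "\<forall>x. P (x + a) = P x"
  shows "(\<lambda>x. if P x then x + a else x) ^^ j = (\<lambda>x. if P x then x + int j * a else x)"
proof (induction j)
  case 0 then show ?case by (simp add: fun_eq_iff)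
next
  case (Suc j)
  have inv: "P (x + int j * a) = P x" for x
  proof (induction j)
    case 0 then show ?case by simp
  next
    case (Suc j)
    have "P (x + int (Suc j) * a) = P ((x + int j * a) + a)" by (simp add: algebra_simps)
    then show ?case using assms Suc by simp
  qed
  show ?case using Suc inv by (auto simp add: fun_eq_iff algebra_simps)
qed

lemma fpow_T:
  fixes P :: "int \<Rightarrow> bool"
  assumes "\<forall>x. P (x + a) = P x"
  shows "fpow (\<lambda>x. if P x then x + a else x) k = (\<lambda>x. if P x then x + k * a else x)"
proof (cases "0 \<le> k")
  case True
  then obtain j where j: "k = int j" by (metis nonneg_eq_int)
  show ?thesis using funpow_T[OF assms, of j] unfolding fpow_def j by simp
next
  case False
  have assms': "\<forall>x. P (x + - a) = P x" using assms by (metis diff_add_cancel diff_minus_eq_add minus_minus)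
  have I: "inv (\<lambda>x. if P x then x + a else x) = (\<lambda>x. if P x then x + - a else x)"
    by (rule inv_unique_comp) (use assms assms' in \<open>auto simp: fun_eq_iff\<close>)
  have mul: "int (nat (-k)) * - a = k * a" using False by simp
  have "fpow (\<lambda>x. if P x then x + a else x) k = (\<lambda>x. if P x then x + - a else x) ^^ nat (-k)"
    using False I by (simp add: fpow_def)
  also have "\<dots> = (\<lambda>x. if P x then x + int (nat (-k)) * - a else x)" by (rule funpow_T[OF assms'])
  also have "\<dots> = (\<lambda>x. if P x then x + k * a else x)" unfolding mul ..
  finally show ?thesis .
qed

lemma fpow_pi: "fpow pi_shift k = (\<lambda>x. x + k)"
proof -
  have "pi_shift = (\<lambda>x. if True then x + 1 else x)" by (simp add: pi_shift_def fun_eq_iff)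
  then show ?thesis using fpow_T[of "\<lambda>x. True" 1 k] by simp
qed

lemma fpow_y: "fpow (y_gen n i) k = (\<lambda>x. if x mod int n = int i mod int n then x + k * int n else x)"
proof -
  have "y_gen n i = (\<lambda>x. if x mod int n = int i mod int n then x + int n else x)"
    by (simp add: y_gen_def fun_eq_iff)
  then show ?thesis using fpow_T[of "\<lambda>x. x mod int n = int i mod int n" "int n" k] by simp
qed

lemma comp_list_snoc: "comp_list (xs @ [f]) = comp_list xs \<circ> f"
  unfolding comp_list_def by (induction xs) auto

lemma ypow_partial:
  "comp_list (map (\<lambda>i. fpow (y_gen n i) (d i)) [1..<k+1]) x
     = x + int n * (\<Sum>j=1..k. if x mod int n = int j mod int n then d j else 0)"
proof (induction k arbitrary: x)
  case 0 then show ?case by (simp add: comp_list_def)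
next
  case (Suc k)
  have "[1..<Suc k + 1] = [1..<k+1] @ [Suc k]" by simp
  then have "comp_list (map (\<lambda>i. fpow (y_gen n i) (d i)) [1..<Suc k+1]) x
     = comp_list (map (\<lambda>i. fpow (y_gen n i) (d i)) [1..<k+1]) (fpow (y_gen n (Suc k)) (d (Suc k)) x)"
    by (simp add: comp_list_snoc)
  also have "\<dots> = comp_list (map (\<lambda>i. fpow (y_gen n i) (d i)) [1..<k+1])
        (x + int n * (if x mod int n = int (Suc k) mod int n then d (Suc k) else 0))"
    by (simp add: fpow_y algebra_simps)
  also have "\<dots> = x + int n * (if x mod int n = int (Suc k) mod int n then d (Suc k) else 0)
       + int n * (\<Sum>j=1..k. if x mod int n = int j mod int n then d j else 0)"
    using Suc.IH by simp
  finally show ?case by (simp add: algebra_simps)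
qed

lemma ypow_formula:
  "y_pow n d x = x + int n * (\<Sum>j=1..n. if x mod int n = int j mod int n then d j else 0)"
  unfolding y_pow_def by (rule ypow_partial)

lemma S_single:
  assumes "1 \<le> j" "j \<le> n"
  shows "(\<Sum>j'=1..n. if int j mod int n = int j' mod int n then d j' else 0) = d j"
proof -
  have "(\<Sum>j'=1..n. if int j mod int n = int j' mod int n then d j' else 0)
      = (\<Sum>j'=1..n. if j' = j then d j' else 0)"
  proof (rule sum.cong)
    fix j' assume "j' \<in> {1..n}"
    then have "1 \<le> j'" "j' \<le> n" by auto
    have "int j mod int n = int j' mod int n \<longleftrightarrow> j = j'"
    proof
      assume h: "int j mod int n = int j' mod int n"
      have "int j mod int n = (if j = n then 0 else int j)" using assms by auto
      moreover have "int j' mod int n = (if j' = n then 0 else int j')" using \<open>1 \<le> j'\<close> \<open>j' \<le> n\<close> by auto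
      ultimately show "j = j'" using h assms \<open>1 \<le> j'\<close> by (auto split: if_splits)
    qed simp
    then show "(if int j mod int n = int j' mod int n then d j' else 0) = (if j' = j then d j' else 0)"
      by auto
  qed simp
  also have "\<dots> = d j" using assms by simp
  finally show ?thesis .
qed

lemma mod_plus1: "0 < (N::int) \<Longrightarrow> (x + 1) mod N = (if x mod N + 1 < N then x mod N + 1 else 0)"
proof -
  assume N: "0 < N"
  have e: "(x + 1) mod N = (x mod N + 1) mod N" by (simp add: mod_add_left_eq)
  have r: "0 \<le> x mod N" "x mod N < N" using N by auto
  show ?thesis
  proof (cases "x mod N + 1 < N")
    case True then show ?thesis using e r by simp
  next
    case False then have "x mod N + 1 = N" using r by simp
    then show ?thesis using e False by simp
  qed
qed

lemma mod_minus1: "0 < (N::int) \<Longrightarrow> (x - 1) mod N = (if 1 \<le> x mod N then x mod N - 1 else N - 1)"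
proof -
  assume N: "0 < N"
  have e: "(x - 1) mod N = (x mod N - 1) mod N" by (simp add: mod_diff_left_eq)
  have r: "0 \<le> x mod N" "x mod N < N" using N by auto
  show ?thesis
  proof (cases "1 \<le> x mod N")
    case True then show ?thesis using e r by simp
  next
    case False then have "x mod N = 0" using r by simp
    then show ?thesis using e False N by (simp add: zmod_minus1)
  qed
qed

lemma c_formula:
  assumes n2: "n \<ge> 2" and k1: "1 \<le> k" and kn: "k \<le> n"
  shows "comp_list (map (\<lambda>i. s_refl n (int i)) [1..<k]) x =
    (if 1 \<le> x mod int n \<and> x mod int n < int k then x + 1
     else if x mod int n = int k mod int n then x - (int k - 1) else x)"
  using k1 kn
proof (induction k arbitrary: x rule: nat_induct_at_least)
  case base
  have "int 1 mod int n = 1" using n2 by simp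
  then show ?case by (simp add: comp_list_def)
next
  case (Suc k)
  define N where "N = int n"
  have N: "N \<ge> 2" using n2 N_def by simp
  have kN: "int k < N" using Suc N_def by simp
  have kmod: "int k mod N = int k" using kN Suc by simp
  have "[1..<Suc k] = [1..<k] @ [k]" using Suc by simp
  then have "comp_list (map (\<lambda>i. s_refl n (int i)) [1..<Suc k]) x
      = comp_list (map (\<lambda>i. s_refl n (int i)) [1..<k]) (s_refl n (int k) x)"
    by (simp add: comp_list_snoc)
  also have "\<dots> = (let y = s_refl n (int k) x in if 1 \<le> y mod N \<and> y mod N < int k then y + 1
     else if y mod N = int k mod N then y - (int k - 1) else y)"
    unfolding Let_def N_def by (rule Suc.IH) (use Suc.prems in simp)
  finally have E: "comp_list (map (\<lambda>i. s_refl n (int i)) [1..<Suc k]) x = \<dots>" .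
  define r where "r = x mod N"
  have r0: "0 \<le> r" "r < N" using N r_def by auto
  have sk: "s_refl n (int k) x = (if r = int k then x + 1 else if r = (int k + 1) mod N then x - 1 else x)"
    using kmod r_def N_def by (simp add: s_refl_def)
  have k1N: "(int k + 1) mod N = (if int k + 1 < N then int k + 1 else 0)"
    using mod_plus1[of N "int k"] kmod N by simp
  have goalrhs: "int (Suc k) mod N = (int k + 1) mod N" by (simp add: add.commute)
  show ?case
  proof (cases "r = int k")
    case True
    have "(x + 1) mod N = (int k + 1) mod N" using True r_def by (metis mod_add_left_eq)
    then show ?thesis using E sk True k1N Suc r_def N_def kN by (auto simp: Let_def)
  next
    case False
    show ?thesis
    proof (cases "r = (int k + 1) mod N")
      case True
      have "(x - 1) mod N = int k" using True mod_minus1[of N x] r_def k1N N Suc kN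
        by (auto split: if_splits)
      then show ?thesis using E sk True False k1N Suc r_def N_def kN kmod
        by (auto simp: Let_def algebra_simps)
    next
      case False2: False
      then show ?thesis using E sk False k1N Suc r_def N_def kN kmod r0
        by (auto simp: Let_def algebra_simps)
    qed
  qed
qed

lemma w_formula:
  assumes n2: "n \<ge> 2"
  shows "comp_list (map (\<lambda>i. s_refl n (int i)) [1..<n]) x =
    (if 1 \<le> x mod int n then x + 1 else x - (int n - 1))"
proof -
  have r: "x mod int n < int n" "0 \<le> x mod int n" using n2 by simp_all
  have e: "int n mod int n = 0" by simp
  show ?thesis
  proof (cases "1 \<le> x mod int n")
    case True then show ?thesis using c_formula[OF n2, of n x] n2 r by simp
  next
    case False then have "x mod int n = 0" using r by linarith
    then show ?thesis using c_formula[OF n2, of n x] n2 e False by simp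
  qed
qed

lemma ypow_at:
  assumes "1 \<le> j" "j \<le> n" "x mod int n = int j mod int n"
  shows "y_pow n d x = x + int n * d j"
  using ypow_formula[of n d x] S_single[OF assms(1,2), of d] assms(3) by simp

lemma W_formula:
  assumes n2: "n \<ge> 2" and k1: "1 \<le> k" and kn: "k \<le> n"
  and w_def: "w = y_pow n d \<circ> comp_list (map (\<lambda>i. s_refl n (int i)) [1..<n])"
  shows "(w ^^ k) 0 = int k - int n + int n * (\<Sum>j=1..k. d j)"
  using k1 kn
proof (induction k rule: nat_induct_at_least)
  case base
  have c0: "comp_list (map (\<lambda>i. s_refl n (int i)) [1..<n]) 0 = 1 - int n"
    using w_formula[OF n2, of 0] by simp
  have "1 - int n = 1 + (-1) * int n" by simp
  then have "(1 - int n) mod int n = int 1 mod int n"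
    by (simp only: mod_mult_self1 of_nat_1)
  then have "y_pow n d (1 - int n) = 1 - int n + int n * d 1"
    using ypow_at[of 1 n "1 - int n" d] n2 by simp
  then show ?case using c0 w_def by simp
next
  case (Suc k)
  define N where "N = int n"
  have Wk: "(w ^^ k) 0 = int k - N + N * (\<Sum>j=1..k. d j)" using Suc N_def by simp
  have kN: "int k < N" using Suc N_def by simp
  have Wmod: "(w ^^ k) 0 mod N = int k"
  proof -
    define s where "s = (\<Sum>j=1..k. d j) - 1"
    have E: "(w ^^ k) 0 = int k + N * s" unfolding Wk s_def by (simp add: algebra_simps)
    have "(int k + N * s) mod N = int k mod N" by simp
    also have "\<dots> = int k" using kN by simp
    finally show ?thesis using E by simp
  qed
  have c: "comp_list (map (\<lambda>i. s_refl n (int i)) [1..<n]) ((w ^^ k) 0) = (w ^^ k) 0 + 1"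
    using w_formula[OF n2, of "(w ^^ k) 0"] Wmod Suc N_def by simp
  have m1: "((w ^^ k) 0 + 1) mod N = int (Suc k) mod N"
  proof -
    have "((w ^^ k) 0 + 1) mod N = ((w ^^ k) 0 mod N + 1) mod N" by (simp add: mod_add_left_eq)
    then show ?thesis using Wmod by (simp add: add.commute)
  qed
  have "y_pow n d ((w ^^ k) 0 + 1) = (w ^^ k) 0 + 1 + N * d (Suc k)"
    using ypow_at[of "Suc k" n "(w ^^ k) 0 + 1" d] m1 Suc N_def by simp
  then have "(w ^^ Suc k) 0 = (w ^^ k) 0 + 1 + N * d (Suc k)" using c w_def by simp
  then have "(w ^^ Suc k) 0 = (int k - N + N * (\<Sum>j=1..k. d j)) + 1 + N * d (Suc k)"
    unfolding Wk .
  then show ?case using N_def by (simp add: algebra_simps)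
qed

theorem corollary3p4:
  fixes n :: nat and d :: "nat \<Rightarrow> int" and m :: int
  assumes "n \<ge> 2"
    and "m = (\<Sum>i=1..n. d i)"
    and "gcd m (int n) = 1"
  shows "conj_in n (y_pow n d \<circ> comp_list (map (\<lambda>i. s_refl n (int i)) [1..<n]))
                   (fpow pi_shift m)
       \<and> (\<forall>u \<in> ext_aff n. conj_in n u (fpow pi_shift m) \<longrightarrow>
              aff_length n (fpow pi_shift m) \<le> aff_length n u)"
proof
  define w where "w = y_pow n d \<circ> comp_list (map (\<lambda>i. s_refl n (int i)) [1..<n])"
  have n2: "n \<ge> 2" using assms by simp
  have per: "\<forall>x. w (x + int n) = w x + int n"
  proof
    fix x
    have c: "comp_list (map (\<lambda>i. s_refl n (int i)) [1..<n]) (x + int n)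
        = comp_list (map (\<lambda>i. s_refl n (int i)) [1..<n]) x + int n"
      using w_formula[OF n2, of x] w_formula[OF n2, of "x + int n"] by simp
    have "y_pow n d (z + int n) = y_pow n d z + int n" for z
      using ypow_formula[of n d z] ypow_formula[of n d "z + int n"] by simp
    then show "w (x + int n) = w x + int n" using c w_def by simp
  qed
  have Wres: "\<forall>k<n. (w^^k) 0 mod int n = int k"
  proof (intro allI impI)
    fix k assume kn: "k < n"
    show "(w^^k) 0 mod int n = int k"
    proof (cases "k = 0")
      case True then show ?thesis by simp
    next
      case False
      then have "(w ^^ k) 0 = int k + int n * ((\<Sum>j=1..k. d j) - 1)"
        using W_formula[OF n2, of k w d] kn w_def by (simp add: algebra_simps)
      then show ?thesis using kn by simp
    qed
  qed
  have Wn: "(w^^n) 0 = int n * m"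
    using W_formula[OF n2, of n w d] n2 w_def assms(2) by simp
  obtain g where g: "bij g" "\<forall>x. g (x + int n) = g x + int n" "\<forall>x. g (x + m) = w (g x)"
    using conj_lemma[of n w m] n2 per Wres Wn assms(3) by auto
  have gin: "g \<in> ext_aff n" using g by (simp add: ext_aff_def)
  have "w = g \<circ> fpow pi_shift m \<circ> inv g"
  proof
    fix z
    have "g (inv g z) = z" using g(1) by (simp add: bij_is_surj surj_f_inv_f)
    then have "w z = w (g (inv g z))" by simp
    also have "\<dots> = g (inv g z + m)" using g(3) by simp
    finally show "w z = (g \<circ> fpow pi_shift m \<circ> inv g) z" by (simp add: fpow_pi)
  qed
  then show "conj_in n (y_pow n d \<circ> comp_list (map (\<lambda>i. s_refl n (int i)) [1..<n]))
                   (fpow pi_shift m)" using gin w_def by (auto simp: conj_in_def)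
next
  have "aff_length n (fpow pi_shift m) = 0"
    unfolding aff_length_def
    by (rule Least_eq_0) (rule exI[of _ m], rule exI[of _ "[]"], simp add: comp_list_def)
  then show "\<forall>u \<in> ext_aff n. conj_in n u (fpow pi_shift m) \<longrightarrow>
              aff_length n (fpow pi_shift m) \<le> aff_length n u" by simp
qed

end
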